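(* Let $d\ge 2$. Up to isomorphism there is exactly one primitive $d$-uniform monomial sunflower whose sunflower has a core of size $d-1$. Its multiset of edges consists of $2d+2$ distinct edges, each of multiplicity one: $2d$ petals and $2$ matching edges.
   Context: A hypergraph is $d$-uniform if every edge has exactly $d$ vertices. A sunflower is a $d$-uniform hypergraph with at least two edges (petals) such that any two distinct petals intersect exactly in a fixed nonempty set $C$, the core. A $d$-uniform monomial sunflower is a multihypergraph $\mathcal H$ whose support (its set of distinct edges) consists of two parts: - a sunflower; - a perfect matching of the sunflower's non-core vertices by $d$-element edges disjoint from the core. It is also required that the edge copies of $\mathcal H$ admit a balanced bicolouring, i.e. a red/blue colouring such that every vertex lies in equally many red as blue copies. $\mathcal H$ is primitive if some balanced bicolouring has no nonempty proper balanced sub-multiset with colours kept. *)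

theory Defs
  imports Main "HOL-Library.Multiset"
begin

definition sunflower :: "nat \<Rightarrow> 'a set set \<Rightarrow> 'a set \<Rightarrow> bool" where
  "sunflower d S C \<longleftrightarrow> finite S \<and> card S \<ge> 2 \<and> C \<noteq> {} \<and>
     (\<forall>e\<in>S. finite e \<and> card e = d) \<and>
     (\<forall>e1\<in>S. \<forall>e2\<in>S. e1 \<noteq> e2 \<longrightarrow> e1 \<inter> e2 = C)"

definition perfect_matching :: "nat \<Rightarrow> 'a set set \<Rightarrow> 'a set \<Rightarrow> bool" where
  "perfect_matching d M V \<longleftrightarrow>
     (\<forall>e\<in>M. finite e \<and> card e = d \<and> e \<subseteq> V) \<and>
     (\<forall>e1\<in>M. \<forall>e2\<in>M. e1 \<noteq> e2 \<longrightarrow> e1 \<inter> e2 = {}) \<and>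
     \<Union>M = V"

definition balanced :: "'a set multiset \<Rightarrow> 'a set multiset \<Rightarrow> bool" where
  "balanced R B \<longleftrightarrow> (\<forall>v. size (filter_mset (\<lambda>e. v \<in> e) R) = size (filter_mset (\<lambda>e. v \<in> e) B))"

definition balanced_bicolouring :: "'a set multiset \<Rightarrow> 'a set multiset \<Rightarrow> 'a set multiset \<Rightarrow> bool" where
  "balanced_bicolouring H R B \<longleftrightarrow> R + B = H \<and> balanced R B"

definition monomial_sunflower ::
  "nat \<Rightarrow> 'a set multiset \<Rightarrow> 'a set set \<Rightarrow> 'a set \<Rightarrow> 'a set set \<Rightarrow> bool" where
  "monomial_sunflower d H S C M \<longleftrightarrow>
     sunflower d S C \<and> perfect_matching d M (\<Union>S - C) \<and>
     set_mset H = S \<union> M \<and> (\<exists>R B. balanced_bicolouring H R B)"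

definition primitive :: "'a set multiset \<Rightarrow> bool" where
  "primitive H \<longleftrightarrow> (\<exists>R B. balanced_bicolouring H R B \<and>
     \<not> (\<exists>R' B'. R' \<subseteq># R \<and> B' \<subseteq># B \<and> R' + B' \<noteq> {#} \<and> R' + B' \<noteq> H \<and> balanced R' B'))"

definition mh_isomorphic :: "'a set multiset \<Rightarrow> 'b set multiset \<Rightarrow> bool" where
  "mh_isomorphic H H' \<longleftrightarrow> (\<exists>f. bij_betw f (\<Union>(set_mset H)) (\<Union>(set_mset H')) \<and>
     image_mset (\<lambda>e. f ` e) H = H')"

end

theory Submission
  imports Defs
begin

definition pet :: "'a set \<Rightarrow> 'a \<Rightarrow> 'a set" where "pet C x = insert x C"
definition rs :: "'a set \<Rightarrow> 'a set \<Rightarrow> 'a set \<Rightarrow> 'a set set" where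
  "rs C A B = insert B (pet C ` A)"
definition Hc :: "'a set \<Rightarrow> 'a set \<Rightarrow> 'a set \<Rightarrow> 'a set multiset" where
  "Hc C A B = mset_set (rs C A B \<union> rs C B A)"
definition canon :: "nat \<Rightarrow> 'a set \<Rightarrow> 'a set \<Rightarrow> 'a set \<Rightarrow> bool" where
  "canon d C A B \<longleftrightarrow> 2 \<le> d \<and> finite C \<and> card C = d - 1 \<and> finite A \<and> finite B \<and>
     card A = d \<and> card B = d \<and> A \<inter> B = {} \<and> C \<inter> A = {} \<and> C \<inter> B = {}"

lemma balanced_sets:
  assumes "finite X" "finite Y"
  shows "balanced (mset_set X) (mset_set Y) \<longleftrightarrow> (\<forall>v. card {e\<in>X. v\<in>e} = card {e\<in>Y. v\<in>e})"
  using assms by (simp add: balanced_def filter_mset_mset_set)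

lemma pet_mem: "v \<notin> C \<Longrightarrow> v \<in> pet C x \<longleftrightarrow> v = x"
  by (auto simp: pet_def)

lemma pet_inj: "inj_on (pet C) A" if "C \<inter> A = {}"
  using that by (auto simp: inj_on_def pet_def)

lemma canon_sym: "canon d C A B \<Longrightarrow> canon d C B A"
  by (auto simp: canon_def)

lemma canon_ne: "canon d C A B \<Longrightarrow> A \<noteq> {} \<and> B \<noteq> {} \<and> C \<noteq> {}"
  unfolding canon_def by (metis card.empty not_numeral_le_zero diff_is_0_eq le_0_eq
     Suc_1 not_less_eq_eq)

lemma canon_cardC: assumes c: "canon d C A B" and that: "v \<in> C" shows "card {e\<in>rs C A B. v\<in>e} = d"
proof -
  have "{e\<in>rs C A B. v\<in>e} = pet C ` A"
    using c that by (auto simp: rs_def pet_def canon_def)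
  then show ?thesis using c pet_inj[of C A] by (simp add: card_image canon_def)
qed

lemma canon_cardA: assumes "canon d C A B" "v \<in> A" shows "{e\<in>rs C A B. v\<in>e} = {pet C v}"
  using assms unfolding canon_def rs_def by (auto simp: pet_mem pet_def)

lemma canon_cardB: assumes "canon d C A B" "v \<in> B" shows "{e\<in>rs C A B. v\<in>e} = {B}"
  using assms unfolding canon_def rs_def by (auto simp: pet_mem pet_def)

lemma canon_cardO: assumes "canon d C A B" "v \<notin> A \<union> B \<union> C" shows "{e\<in>rs C A B. v\<in>e} = {}"
  using assms unfolding canon_def rs_def by (auto simp: pet_mem pet_def)

lemma finite_rs: "finite A \<Longrightarrow> finite (rs C A B)" by (simp add: rs_def)

lemma canon_bal: "canon d C A B \<Longrightarrow> balanced (mset_set (rs C A B)) (mset_set (rs C B A))"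
proof -
  assume c: "canon d C A B"
  hence c': "canon d C B A" by (rule canon_sym)
  have "card {e\<in>rs C A B. v\<in>e} = card {e\<in>rs C B A. v\<in>e}" for v
  proof -
    consider "v \<in> C" | "v \<in> A" | "v \<in> B" | "v \<notin> A \<union> B \<union> C" by blast
    then show ?thesis
    proof cases
      case 1 then show ?thesis using canon_cardC[OF c 1] canon_cardC[OF c' 1] by simp
    next
      case 2 then show ?thesis using canon_cardA[OF c 2] canon_cardB[OF c' 2] by simp
    next
      case 3 then show ?thesis using canon_cardB[OF c 3] canon_cardA[OF c' 3] by simp
    next
      case 4 then show ?thesis proof -
        have v: "v \<notin> B \<union> A \<union> C" using 4 by auto
        show ?thesis unfolding canon_cardO[OF c 4] canon_cardO[OF c' v] by simp
      qed
    qed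
  qed
  moreover have "finite (rs C A B)" "finite (rs C B A)" using c by (auto simp: finite_rs canon_def)
  ultimately show ?thesis using balanced_sets by blast
qed

lemma sub_mset_set:
  assumes "R \<subseteq># mset_set Y"
  shows "R = mset_set (set_mset R)"
proof -
  have "count R x \<le> 1" for x
    using assms by (metis count_mset_set' mset_subset_eq_count order_trans zero_le_one order_refl)
  then show ?thesis
    by (simp add: multiset_eq_iff count_mset_set') (metis One_nat_def count_eq_zero_iff le_SucE le_zero_eq)
qed

lemma rs_disj: assumes "canon d C A B" shows "rs C A B \<inter> rs C B A = {}"
proof -
  have ne: "A \<noteq> {}" "B \<noteq> {}" "C \<noteq> {}" using canon_ne[OF assms] by auto
  obtain c where cC: "c \<in> C" using ne by auto
  have 1: "A \<noteq> B" using assms ne unfolding canon_def by auto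
  have 2: "pet C x \<noteq> B" "pet C x \<noteq> A" for x
    using assms cC unfolding canon_def pet_def by auto
  have 3: "pet C y \<noteq> pet C x" if "y \<in> A" "x \<in> B" for x y
    using assms that unfolding canon_def pet_def by auto
  show ?thesis unfolding rs_def using 1 2 3 by auto
qed

lemma canon_prim:
  assumes c: "canon d C A B"
  shows "primitive (Hc C A B)"
proof -
  have c': "canon d C B A" using c by (rule canon_sym)
  have fin: "finite (rs C A B)" "finite (rs C B A)" using c by (auto simp: canon_def finite_rs)
  have H: "Hc C A B = mset_set (rs C A B) + mset_set (rs C B A)"
    unfolding Hc_def using fin rs_disj[OF c] by (simp add: mset_set_Union)
  have ne: "A \<noteq> {}" "B \<noteq> {}" "C \<noteq> {}" using canon_ne[OF c] by auto
  have pinjA: "inj_on (pet C) A" and pinjB: "inj_on (pet C) B" using c pet_inj unfolding canon_def by auto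
  show ?thesis unfolding primitive_def
  proof (intro exI conjI notI)
    show "balanced_bicolouring (Hc C A B) (mset_set (rs C A B)) (mset_set (rs C B A))"
      using H canon_bal[OF c] by (simp add: balanced_bicolouring_def)
  next
    assume "\<exists>R' B'. R' \<subseteq># mset_set (rs C A B) \<and> B' \<subseteq># mset_set (rs C B A) \<and>
             R' + B' \<noteq> {#} \<and> R' + B' \<noteq> Hc C A B \<and> balanced R' B'"
    then obtain R' B' where R': "R' \<subseteq># mset_set (rs C A B)" and B': "B' \<subseteq># mset_set (rs C B A)"
      and ne1: "R' + B' \<noteq> {#}" and ne2: "R' + B' \<noteq> Hc C A B" and bal: "balanced R' B'" by blast
    define X where "X = set_mset R'"
    define Y where "Y = set_mset B'"
    have RX: "R' = mset_set X" using sub_mset_set[OF R'] X_def by simp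
    have BY: "B' = mset_set Y" using sub_mset_set[OF B'] Y_def by simp
    have XS: "X \<subseteq> rs C A B" using R' fin X_def by (metis mset_subset_eqD elem_mset_set subsetI)
    have YS: "Y \<subseteq> rs C B A" using B' fin Y_def by (metis mset_subset_eqD elem_mset_set subsetI)
    have fX: "finite X" "finite Y" using X_def Y_def by auto
    have bal2: "card (X \<inter> {e\<in>rs C A B. v\<in>e}) = card (Y \<inter> {e\<in>rs C B A. v\<in>e})" for v
    proof -
      have "card {e\<in>X. v\<in>e} = card {e\<in>Y. v\<in>e}"
        using bal fX RX BY balanced_sets by blast
      moreover have "{e\<in>X. v\<in>e} = X \<inter> {e\<in>rs C A B. v\<in>e}" "{e\<in>Y. v\<in>e} = Y \<inter> {e\<in>rs C B A. v\<in>e}"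
        using XS YS by auto
      ultimately show ?thesis by simp
    qed
    have eqA: "pet C y \<in> X \<longleftrightarrow> A \<in> Y" if "y \<in> A" for y
    proof -
      have "card (X \<inter> {pet C y}) = card (Y \<inter> {A})"
        using bal2[of y] canon_cardA[OF c that] canon_cardB[OF c' that] by simp
      then show ?thesis by (simp add: Int_insert_right split: if_splits)
    qed
    have eqB: "B \<in> X \<longleftrightarrow> pet C x \<in> Y" if "x \<in> B" for x
    proof -
      have "card (X \<inter> {B}) = card (Y \<inter> {pet C x})"
        using bal2[of x] canon_cardB[OF c that] canon_cardA[OF c' that] by simp
      then show ?thesis by (simp add: Int_insert_right split: if_splits)
    qed
    obtain v where vC: "v \<in> C" using ne by auto
    have cardc: "card (X \<inter> pet C ` A) = card (Y \<inter> pet C ` B)"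
    proof -
      have "{e\<in>rs C A B. v\<in>e} = pet C ` A" "{e\<in>rs C B A. v\<in>e} = pet C ` B"
        using c vC by (auto simp: rs_def pet_def canon_def)
      then show ?thesis using bal2[of v] by simp
    qed
    show False
    proof (cases "A \<in> Y")
      case True
      have "pet C ` A \<subseteq> X" using eqA True by auto
      hence "card (Y \<inter> pet C ` B) = card (pet C ` B)"
        using cardc card_image[OF pinjA] card_image[OF pinjB] c
        by (simp add: Int_absorb1 canon_def)
      hence "Y \<inter> pet C ` B = pet C ` B"
        using card_subset_eq[of "pet C ` B" "Y \<inter> pet C ` B"] c by (auto simp: canon_def)
      moreover obtain x where "x \<in> B" using ne by auto
      ultimately have "B \<in> X" using eqB by auto
      have "X = rs C A B" using XS \<open>B \<in> X\<close> \<open>pet C ` A \<subseteq> X\<close> by (auto simp: rs_def)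
      moreover have "Y = rs C B A" using YS True \<open>Y \<inter> pet C ` B = pet C ` B\<close> by (auto simp: rs_def)
      ultimately show False using ne2 RX BY H by simp
    next
      case False
      have "X \<inter> pet C ` A = {}" using eqA False by auto
      hence "Y \<inter> pet C ` B = {}" using cardc fX by simp
      moreover obtain x where "x \<in> B" using ne by auto
      ultimately have "B \<notin> X" using eqB by auto
      have "X = {}" using XS \<open>B \<notin> X\<close> \<open>X \<inter> pet C ` A = {}\<close> by (auto simp: rs_def)
      moreover have "Y = {}" using YS False \<open>Y \<inter> pet C ` B = {}\<close> by (auto simp: rs_def)
      ultimately show False using ne1 RX BY by simp
    qed
  qed
qed

lemma rs_union: "rs C A B \<union> rs C B A = insert A (insert B (pet C ` (A \<union> B)))"
  by (auto simp: rs_def)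

lemma canon_fin: "canon d C A B \<Longrightarrow> finite (rs C A B \<union> rs C B A)"
  by (auto simp: canon_def rs_union)

lemma canon_petcard: assumes "canon d C A B" shows "card (pet C ` (A \<union> B)) = 2 * d"
proof -
  have "inj_on (pet C) (A \<union> B)" using assms by (intro pet_inj) (auto simp: canon_def)
  then show ?thesis using assms by (simp add: card_image card_Un_disjoint canon_def)
qed

lemma canon_ms:
  assumes c: "canon d C A B"
  shows "monomial_sunflower d (Hc C A B) (pet C ` (A \<union> B)) C {A, B}"
proof -
  have ne: "A \<noteq> {}" "B \<noteq> {}" "C \<noteq> {}" using canon_ne[OF c] by auto
  have d2: "2 \<le> d" and fC: "finite C" and cC: "card C = d - 1" using c by (auto simp: canon_def)
  have sf: "sunflower d (pet C ` (A \<union> B)) C"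
    unfolding sunflower_def
  proof (intro conjI ballI impI)
    show "finite (pet C ` (A \<union> B))" using c by (auto simp: canon_def)
    show "2 \<le> card (pet C ` (A \<union> B))" using canon_petcard[OF c] d2 by simp
    show "C \<noteq> {}" by (rule ne)
  next
    fix e assume "e \<in> pet C ` (A \<union> B)"
    then obtain x where x: "x \<in> A \<union> B" "e = pet C x" by auto
    have "x \<notin> C" using x c by (auto simp: canon_def)
    then show "finite e" "card e = d" using x fC cC d2 by (auto simp: pet_def)
  next
    fix e1 e2 assume "e1 \<in> pet C ` (A \<union> B)" "e2 \<in> pet C ` (A \<union> B)" "e1 \<noteq> e2"
    then obtain x y where "x \<in> A \<union> B" "y \<in> A \<union> B" "e1 = pet C x" "e2 = pet C y" "x \<noteq> y" by auto
    then show "e1 \<inter> e2 = C" using c by (auto simp: canon_def pet_def)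
  qed
  have U: "\<Union>(pet C ` (A \<union> B)) - C = A \<union> B"
    using c ne by (auto simp: canon_def pet_def)
  have pm: "perfect_matching d {A, B} (\<Union>(pet C ` (A \<union> B)) - C)"
    unfolding U perfect_matching_def using c by (auto simp: canon_def)
  have fin: "finite (rs C A B)" "finite (rs C B A)" using c by (auto simp: canon_def finite_rs)
  have H: "Hc C A B = mset_set (rs C A B) + mset_set (rs C B A)"
    unfolding Hc_def using fin rs_disj[OF c] by (simp add: mset_set_Union)
  have bb: "balanced_bicolouring (Hc C A B) (mset_set (rs C A B)) (mset_set (rs C B A))"
    using H canon_bal[OF c] by (simp add: balanced_bicolouring_def)
  have "set_mset (Hc C A B) = pet C ` (A \<union> B) \<union> {A, B}"
    unfolding Hc_def using canon_fin[OF c] by (auto simp: rs_union)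
  then show ?thesis unfolding monomial_sunflower_def using sf pm bb by blast
qed

lemma canon_counts:
  assumes c: "canon d C A B"
  shows "(\<forall>e. count (Hc C A B) e \<le> 1) \<and> size (Hc C A B) = 2 * d + 2 \<and>
         card (pet C ` (A \<union> B)) = 2 * d \<and> card {A, B} = 2"
proof -
  have ne: "A \<noteq> {}" "B \<noteq> {}" "C \<noteq> {}" using canon_ne[OF c] by auto
  have AB: "A \<noteq> B" using c ne by (auto simp: canon_def)
  have notin: "A \<notin> pet C ` (A \<union> B)" "B \<notin> pet C ` (A \<union> B)"
    using c ne by (auto simp: canon_def pet_def)
  have "card (insert A (insert B (pet C ` (A \<union> B)))) = 2 * d + 2"
    using canon_petcard[OF c] notin AB c by (simp add: canon_def)
  then show ?thesis using canon_petcard[OF c] AB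
    by (simp add: Hc_def count_mset_set' rs_union)
qed

lemma Hc_union: assumes c: "canon d C A B" shows "\<Union>(set_mset (Hc C A B)) = C \<union> A \<union> B"
proof -
  have ne: "A \<noteq> {}" using canon_ne[OF c] by auto
  show ?thesis unfolding Hc_def using canon_fin[OF c] ne by (auto simp: rs_union pet_def)
qed

lemma canon_iso:
  fixes C A B :: "'a set" and C' A' B' :: "'b set"
  assumes c: "canon d C A B" and c2: "canon d C' A' B'"
  shows "mh_isomorphic (Hc C A B) (Hc C' A' B')"
proof -
  obtain f1 where f1: "bij_betw f1 C C'" using c c2 finite_same_card_bij unfolding canon_def by metis
  obtain f2 where f2: "bij_betw f2 A A'" using c c2 finite_same_card_bij unfolding canon_def by metis
  obtain f3 where f3: "bij_betw f3 B B'" using c c2 finite_same_card_bij unfolding canon_def by metis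
  define f where "f x = (if x \<in> C then f1 x else if x \<in> A then f2 x else f3 x)" for x
  have g1: "bij_betw f C C'" using f1 by (rule bij_betw_cong[THEN iffD1, rotated]) (simp add: f_def)
  have g2: "bij_betw f A A'" using f2 c by (intro bij_betw_cong[THEN iffD1, OF _ f2]) (auto simp: f_def canon_def)
  have g3: "bij_betw f B B'" using f3 c by (intro bij_betw_cong[THEN iffD1, OF _ f3]) (auto simp: f_def canon_def)
  have g: "bij_betw f (C \<union> A \<union> B) (C' \<union> A' \<union> B')"
    using c2 by (intro bij_betw_combine g1 g2 g3) (auto simp: canon_def)
  have fA: "f ` A = A'" "f ` B = B'" "f ` C = C'" using g1 g2 g3 by (auto simp: bij_betw_def)
  have fpet: "f ` pet C x = pet C' (f x)" for x using fA by (simp add: pet_def)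
  define T where "T = insert A (insert B (pet C ` (A \<union> B)))"
  have T: "Hc C A B = mset_set T" unfolding Hc_def T_def rs_union ..
  have T2: "Hc C' A' B' = mset_set (insert A' (insert B' (pet C' ` (A' \<union> B'))))"
    unfolding Hc_def rs_union ..
  have UT: "\<Union>T = C \<union> A \<union> B" using Hc_union[OF c] canon_fin[OF c] unfolding T Hc_def rs_union T_def by simp
  have inj: "inj_on ((`) f) T" using g UT by (intro inj_on_image) (simp add: bij_betw_def)
  have "(`) f ` T = insert A' (insert B' (pet C' ` (A' \<union> B')))"
  proof -
    have "(`) f ` pet C ` (A \<union> B) = pet C' ` (f ` (A \<union> B))" by (auto simp: fpet image_image)
    then show ?thesis unfolding T_def using fA by (simp add: image_Un)
  qed
  then have "image_mset ((`) f) (Hc C A B) = Hc C' A' B'"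
    unfolding T T2 using image_mset_mset_set[OF inj] by simp
  then show ?thesis unfolding mh_isomorphic_def Hc_union[OF c] Hc_union[OF c2] using g by blast
qed

lemma Hc_split: assumes c: "canon d C A B"
  shows "Hc C A B = mset_set (rs C A B) + mset_set (rs C B A)"
proof -
  have fin: "finite (rs C A B)" "finite (rs C B A)" using c by (auto simp: canon_def finite_rs)
  show ?thesis unfolding Hc_def using fin rs_disj[OF c] by (simp add: mset_set_Union)
qed

lemma Hc_set: assumes c: "canon d C A B"
  shows "set_mset (Hc C A B) = insert A (insert B (pet C ` (A \<union> B)))"
  unfolding Hc_def using canon_fin[OF c] by (simp add: rs_union)

definition nosub :: "'a set multiset \<Rightarrow> 'a set multiset \<Rightarrow> 'a set multiset \<Rightarrow> bool" where
  "nosub H X Y \<longleftrightarrow> (\<forall>R' B'. R' \<subseteq># X \<longrightarrow> B' \<subseteq># Y \<longrightarrow> R' + B' \<noteq> {#} \<longrightarrow> R' + B' \<noteq> H \<longrightarrow> \<not> balanced R' B')"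

lemma balanced_sym: "balanced X Y \<Longrightarrow> balanced Y X" by (simp add: balanced_def)

lemma nosub_sym: "nosub H X Y \<Longrightarrow> nosub H Y X"
  unfolding nosub_def by (metis add.commute balanced_sym)

locale msf =
  fixes d :: nat and H :: "'a set multiset" and S C M
  assumes d2: "2 \<le> d" and ms: "monomial_sunflower d H S C M" and cC: "card C = d - 1"
begin

lemma sf: "sunflower d S C" using ms by (simp add: monomial_sunflower_def)
lemma pm: "perfect_matching d M (\<Union>S - C)" using ms by (simp add: monomial_sunflower_def)
lemma setH: "set_mset H = S \<union> M" using ms by (simp add: monomial_sunflower_def)
lemma finS: "finite S" and cardS: "2 \<le> card S" and Cne: "C \<noteq> {}"
  and Scard: "\<And>e. e \<in> S \<Longrightarrow> finite e \<and> card e = d"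
  and Sint: "\<And>e1 e2. e1 \<in> S \<Longrightarrow> e2 \<in> S \<Longrightarrow> e1 \<noteq> e2 \<Longrightarrow> e1 \<inter> e2 = C"
  using sf by (auto simp: sunflower_def)
lemma finC: "finite C" using cC d2 by (metis One_nat_def card.infinite diff_is_0_eq not_less_eq_eq numeral_2_eq_2)

lemma Msub: "\<And>E. E \<in> M \<Longrightarrow> finite E \<and> card E = d \<and> E \<subseteq> \<Union>S - C"
  and Mdisj: "\<And>E1 E2. E1 \<in> M \<Longrightarrow> E2 \<in> M \<Longrightarrow> E1 \<noteq> E2 \<Longrightarrow> E1 \<inter> E2 = {}"
  and MU: "\<Union>M = \<Union>S - C"
  using pm by (auto simp: perfect_matching_def)

lemma CP: assumes "P \<in> S" shows "C \<subseteq> P"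
proof -
  have "card (S - {P}) \<ge> 1" using cardS finS assms by (simp add: card_Diff_singleton)
  then obtain Q where "Q \<in> S" "Q \<noteq> P" by (metis One_nat_def card_0_eq DiffE ex_in_conv finite_Diff insertI1 not_one_le_zero finS)
  then show ?thesis using Sint[of P Q] assms by auto
qed

lemma petform: assumes "P \<in> S" shows "\<exists>x. x \<notin> C \<and> P = pet C x"
proof -
  have "card (P - C) = 1" using CP[OF assms] Scard[OF assms] cC finC d2
    by (simp add: card_Diff_subset)
  then obtain x where "P - C = {x}" by (rule card_1_singletonE)
  then show ?thesis using CP[OF assms] by (auto simp: pet_def)
qed

lemma pet_uniq: assumes "P \<in> S" "v \<in> P" "v \<notin> C" shows "P = pet C v"
  using petform[OF assms(1)] assms by (auto simp: pet_def)

lemma petS: assumes "v \<in> \<Union>S - C" shows "pet C v \<in> S"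
  using assms pet_uniq by auto

lemma MC: "E \<in> M \<Longrightarrow> E \<inter> C = {}" using Msub by blast

lemma M_uniq: "E \<in> M \<Longrightarrow> E' \<in> M \<Longrightarrow> v \<in> E \<Longrightarrow> v \<in> E' \<Longrightarrow> E = E'"
  using Mdisj by blast

lemma pet_ne_M: "E \<in> M \<Longrightarrow> pet C v \<noteq> E"
  using MC Cne by (auto simp: pet_def)

lemma deg: assumes Z: "set_mset Z \<subseteq> S \<union> M" and E: "E \<in> M" "v \<in> E"
  shows "size (filter_mset (\<lambda>e. v \<in> e) Z) = count Z (pet C v) + count Z E"
proof -
  have vV: "v \<in> \<Union>S - C" using Msub E by blast
  have "filter_mset (\<lambda>e. v \<in> e) Z = filter_mset (\<lambda>e. e = pet C v \<or> e = E) Z"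
  proof (rule filter_mset_cong[OF refl])
    fix e assume "e \<in># Z"
    then have "e \<in> S \<union> M" using Z by auto
    then show "(v \<in> e) = (e = pet C v \<or> e = E)"
      using pet_uniq[of e v] vV E M_uniq[of e E v] by (auto simp: pet_def)
  qed
  also have "\<dots> = replicate_mset (count Z (pet C v)) (pet C v) + replicate_mset (count Z E) E"
    using pet_ne_M[OF E(1), of v] by (auto simp: multiset_eq_iff)
  finally show ?thesis by simp
qed

lemma subH: assumes "X + Y = H" shows "set_mset X \<subseteq> S \<union> M \<and> set_mset Y \<subseteq> S \<union> M"
proof -
  have "set_mset X \<union> set_mset Y = S \<union> M" using setH assms by (metis set_mset_union)
  then show ?thesis by blast
qed

lemma L1: assumes "X + Y = H" "nosub H X Y" shows "count X e = 0 \<or> count Y e = 0"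
proof (rule ccontr)
  assume "\<not> ?thesis"
  then have "e \<in># X" "e \<in># Y" by auto
  then have s: "{#e#} \<subseteq># X" "{#e#} \<subseteq># Y" by auto
  have b: "balanced {#e#} {#e#}" by (simp add: balanced_def)
  have "{#e#} + {#e#} \<noteq> H"
  proof
    assume "{#e#} + {#e#} = H"
    then have "S \<subseteq> {e}" using setH by auto
    then have "card S \<le> 1" using card_mono[of "{e}" S] by simp
    then show False using cardS by simp
  qed
  moreover have "{#e#} + {#e#} \<noteq> {#}" by simp
  ultimately show False using assms(2)[unfolded nosub_def, rule_format, OF s(1) s(2)] b by blast
qed

lemma L2: assumes XY: "X + Y = H" and bal: "balanced X Y" shows "\<exists>P\<in>S. count X P \<ge> 1"
proof (rule ccontr)
  assume "\<not> ?thesis"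
  then have z: "\<forall>P\<in>S. count X P = 0" by (auto simp: count_eq_zero_iff)
  obtain c where c: "c \<in> C" using Cne by auto
  have fX: "filter_mset (\<lambda>e. c \<in> e) X = {#}"
  proof -
    have "\<not> c \<in> e" if "e \<in># X" for e
    proof -
      have "e \<in> S \<union> M" using that subH[OF XY] by auto
      then show ?thesis using z that MC c by (auto simp: count_eq_zero_iff)
    qed
    then show ?thesis by (simp add: filter_empty_mset)
  qed
  obtain P where P: "P \<in> S" using cardS by (metis card.empty ex_in_conv not_numeral_le_zero)
  have h1: "count H P \<ge> 1" using P setH by (simp add: Suc_le_eq)
  have "count H P = count X P + count Y P" using XY by auto
  then have "count Y P \<ge> 1" using z P h1 by simp
  then have "P \<in># filter_mset (\<lambda>e. c \<in> e) Y" using CP[OF P] c by auto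
  then have "size (filter_mset (\<lambda>e. c \<in> e) Y) \<noteq> 0" by auto
  moreover have "size (filter_mset (\<lambda>e. c \<in> e) X) = size (filter_mset (\<lambda>e. c \<in> e) Y)"
    using bal unfolding balanced_def by blast
  ultimately show False using fX by (metis size_empty)
qed

lemma L4: assumes XY: "X + Y = H" and bal: "balanced X Y" and ns: "nosub H X Y"
  and a: "count X (pet C a) \<ge> 1" and E: "E \<in> M" "a \<in> E"
  shows "count Y E \<ge> 1 \<and> (\<forall>y\<in>E. count X (pet C y) \<ge> 1)"
proof -
  have s: "set_mset X \<subseteq> S \<union> M" "set_mset Y \<subseteq> S \<union> M" using subH[OF XY] by auto
  have eq: "count X (pet C v) + count X E = count Y (pet C v) + count Y E" if "v \<in> E" for v
  proof -
    have "size (filter_mset (\<lambda>e. v \<in> e) X) = size (filter_mset (\<lambda>e. v \<in> e) Y)"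
      using bal unfolding balanced_def by blast
    then show ?thesis using deg[OF s(1) E(1) that] deg[OF s(2) E(1) that] by simp
  qed
  have "count Y (pet C a) = 0" using L1[OF XY ns, of "pet C a"] a by auto
  then have YE: "count Y E \<ge> 1" using eq[OF E(2)] a by linarith
  then have XE: "count X E = 0" using L1[OF XY ns, of E] by linarith
  show ?thesis
  proof (intro conjI ballI YE)
    fix y assume "y \<in> E" then show "count X (pet C y) \<ge> 1" using eq[of y] XE YE by linarith
  qed
qed

lemma struct: assumes pr: "primitive H"
  shows "\<exists>A B. canon d C A B \<and> H = Hc C A B \<and> S = pet C ` (A \<union> B) \<and> M = {A, B}"
proof -
  obtain R Bl where RB: "R + Bl = H" and bal: "balanced R Bl" and ns: "nosub H R Bl"
    using pr unfolding primitive_def balanced_bicolouring_def nosub_def by blast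
  have RB': "Bl + R = H" using RB by (simp add: add.commute)
  have bal': "balanced Bl R" using bal by (rule balanced_sym)
  have ns': "nosub H Bl R" using ns by (rule nosub_sym)
  obtain Pa where Pa: "Pa \<in> S" "count R Pa \<ge> 1" using L2[OF RB bal] by blast
  obtain a where a: "a \<notin> C" "Pa = pet C a" using petform[OF Pa(1)] by blast
  have aV: "a \<in> \<Union>S - C" using a Pa(1) by (auto simp: pet_def)
  obtain Ea where Ea: "Ea \<in> M" "a \<in> Ea" using aV MU by blast
  have La: "count Bl Ea \<ge> 1 \<and> (\<forall>y\<in>Ea. count R (pet C y) \<ge> 1)"
    using L4[OF RB bal ns _ Ea] Pa a by simp
  obtain Pb where Pb: "Pb \<in> S" "count Bl Pb \<ge> 1" using L2[OF RB' bal'] by blast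
  obtain b where b: "b \<notin> C" "Pb = pet C b" using petform[OF Pb(1)] by blast
  have bV: "b \<in> \<Union>S - C" using b Pb(1) by (auto simp: pet_def)
  obtain Eb where Eb: "Eb \<in> M" "b \<in> Eb" using bV MU by blast
  have Lb: "count R Eb \<ge> 1 \<and> (\<forall>x\<in>Eb. count Bl (pet C x) \<ge> 1)"
    using L4[OF RB' bal' ns' _ Eb] Pb b by simp
  have "count R Ea = 0" using L1[OF RB ns, of Ea] La by linarith
  then have ne: "Ea \<noteq> Eb" using Lb by (metis not_one_le_zero)
  have c: "canon d C Ea Eb" unfolding canon_def
    using d2 finC cC Msub[OF Ea(1)] Msub[OF Eb(1)] Mdisj[OF Ea(1) Eb(1) ne] MC[OF Ea(1)] MC[OF Eb(1)]
    by (auto simp: Int_commute)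
  have fin: "finite (rs C Ea Eb)" "finite (rs C Eb Ea)" using c by (auto simp: canon_def finite_rs)
  have s1: "mset_set (rs C Ea Eb) \<subseteq># R"
    unfolding subseteq_mset_def
  proof
    fix e show "count (mset_set (rs C Ea Eb)) e \<le> count R e"
      using La Lb fin by (auto simp: count_mset_set' rs_def)
  qed
  have s2: "mset_set (rs C Eb Ea) \<subseteq># Bl"
    unfolding subseteq_mset_def
  proof
    fix e show "count (mset_set (rs C Eb Ea)) e \<le> count Bl e"
      using La Lb fin by (auto simp: count_mset_set' rs_def)
  qed
  have b2: "balanced (mset_set (rs C Ea Eb)) (mset_set (rs C Eb Ea))" by (rule canon_bal[OF c])
  have n1: "mset_set (rs C Ea Eb) + mset_set (rs C Eb Ea) \<noteq> {#}"
  proof -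
    have "Eb \<in># mset_set (rs C Ea Eb)" using fin by (simp add: rs_def)
    then show ?thesis by auto
  qed
  have HH: "H = Hc C Ea Eb"
  proof (rule ccontr)
    assume "H \<noteq> Hc C Ea Eb"
    then have "mset_set (rs C Ea Eb) + mset_set (rs C Eb Ea) \<noteq> H" using Hc_split[OF c] by simp
    then show False using ns[unfolded nosub_def, rule_format, OF s1 s2 n1] b2 by blast
  qed
  have SM: "S \<union> M = insert Ea (insert Eb (pet C ` (Ea \<union> Eb)))"
    using setH HH Hc_set[OF c] by simp
  obtain c0 where c0: "c0 \<in> C" using Cne by auto
  have "S = pet C ` (Ea \<union> Eb)"
  proof
    show "S \<subseteq> pet C ` (Ea \<union> Eb)"
    proof
      fix P assume P: "P \<in> S"
      then have "c0 \<in> P" using CP c0 by auto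
      moreover have "c0 \<notin> Ea" "c0 \<notin> Eb" using MC[OF Ea(1)] MC[OF Eb(1)] c0 by auto
      ultimately show "P \<in> pet C ` (Ea \<union> Eb)" using SM P by auto
    qed
    show "pet C ` (Ea \<union> Eb) \<subseteq> S"
      using SM pet_ne_M by blast
  qed
  moreover have "M = {Ea, Eb}"
  proof
    show "M \<subseteq> {Ea, Eb}" using SM pet_ne_M by blast
    show "{Ea, Eb} \<subseteq> M" using Ea Eb by auto
  qed
  ultimately show ?thesis using c HH by blast
qed

end

lemma struct_ext:
  assumes "2 \<le> d" "monomial_sunflower d H S C M" "card C = d - 1" "primitive H"
  shows "\<exists>A B. canon d C A B \<and> H = Hc C A B \<and> S = pet C ` (A \<union> B) \<and> M = {A, B}"
proof -
  have "msf d H S C M" using assms by (simp add: msf_def)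
  then show ?thesis using msf.struct assms(4) by blast
qed

theorem mainTheorem9:
  fixes d :: nat
  assumes "d \<ge> 2"
  shows "(\<exists>(H :: nat set multiset) S C M.
            monomial_sunflower d H S C M \<and> card C = d - 1 \<and> primitive H)
       \<and> (\<forall>(H :: 'a set multiset) S C M (H' :: 'b set multiset) S' C' M'.
            monomial_sunflower d H S C M \<and> card C = d - 1 \<and> primitive H \<and>
            monomial_sunflower d H' S' C' M' \<and> card C' = d - 1 \<and> primitive H'
            \<longrightarrow> mh_isomorphic H H')
       \<and> (\<forall>(H :: 'a set multiset) S C M.
            monomial_sunflower d H S C M \<and> card C = d - 1 \<and> primitive H
            \<longrightarrow> (\<forall>e. count H e \<le> 1) \<and> size H = 2 * d + 2 \<and>
                card S = 2 * d \<and> card M = 2)"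
proof -
  let ?C = "{2*d..<3*d-1} :: nat set" and ?A = "{0..<d} :: nat set" and ?B = "{d..<2*d} :: nat set"
  have c: "canon d ?C ?A ?B" unfolding canon_def using assms by auto
  have P1: "\<exists>(H :: nat set multiset) S C M. monomial_sunflower d H S C M \<and> card C = d - 1 \<and> primitive H"
    using canon_ms[OF c] canon_prim[OF c] c unfolding canon_def by blast
  have P2: "mh_isomorphic H H'" if h: "monomial_sunflower d H S C M \<and> card C = d - 1 \<and> primitive H \<and>
            monomial_sunflower d H' S' C' M' \<and> card C' = d - 1 \<and> primitive H'"
    for H :: "'a set multiset" and S C M and H' :: "'b set multiset" and S' C' M'
  proof -
    obtain A B where 1: "canon d C A B" "H = Hc C A B" using struct_ext[of d H S C M] assms h by blast
    obtain A' B' where 2: "canon d C' A' B'" "H' = Hc C' A' B'" using struct_ext[of d H' S' C' M'] assms h by blast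
    show "mh_isomorphic H H'" using canon_iso[OF 1(1) 2(1)] 1 2 by simp
  qed
  have P3: "(\<forall>e. count H e \<le> 1) \<and> size H = 2 * d + 2 \<and> card S = 2 * d \<and> card M = 2"
    if h: "monomial_sunflower d H S C M \<and> card C = d - 1 \<and> primitive H"
    for H :: "'a set multiset" and S C M
  proof -
    obtain A B where 1: "canon d C A B" "H = Hc C A B" "S = pet C ` (A \<union> B)" "M = {A, B}"
      using struct_ext[of d H S C M] assms h by blast
    show ?thesis using canon_counts[OF 1(1)] 1 by simp
  qed
  show ?thesis using P1 P2 P3 by blast
qed

end
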